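(* Let $p$ be a prime and $\sigma:\mathcal A_m\to\mathcal A_m^*$ a $p$-uniform morphism. For every $n\in\mathbb{N}$, $$R_{n+1}(T)=M_\sigma(T^{p^n})R_n(T),$$ where $R_n(T)$ is the column vector $(P_{\sigma^n(0)}(T),\dots,P_{\sigma^n(m-1)}(T))^{\mathsf T}$.
   Context: $\mathcal A_m=\{0,\dots,m-1\}$, letters viewed in $\mathbb{F}_p$. For $W=w_0\cdots w_{r-1}$, $P_W(T)=\sum_{j=0}^{r-1}w_{r-1-j}T^j$, and $\beta_{W,j}(T)=\sum_{i:\,w_i=j}T^{r-1-i}\in\mathbb{F}_p[T]$ (zero if $j$ does not occur). The matrix associated with $\sigma$ is the $m\times m$ matrix $M_\sigma(T)=(\beta_{\sigma(i),j}(T))_{0\le i,j\le m-1}$ with entries in $\mathbb{F}_p[T]$. A $p$-uniform morphism sends each letter to a word of length $p$. *)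

theory Defs
  imports "HOL-Computational_Algebra.Polynomial" "Berlekamp_Zassenhaus.Finite_Field"
begin

text \<open>Words over A_m are lists of naturals; letters are viewed in F_p = 'p mod_ring.\<close>

definition P_word :: "nat list \<Rightarrow> 'p::prime_card mod_ring poly" where
  "P_word W = (\<Sum>j<length W. monom (of_nat (W ! (length W - 1 - j))) j)"

definition beta_word :: "nat list \<Rightarrow> nat \<Rightarrow> 'p::prime_card mod_ring poly" where
  "beta_word W j = (\<Sum>i\<in>{i. i < length W \<and> W ! i = j}. monom 1 (length W - 1 - i))"

definition morph_word :: "(nat \<Rightarrow> nat list) \<Rightarrow> nat list \<Rightarrow> nat list" where
  "morph_word \<sigma> w = concat (map \<sigma> w)"

definition morph_iter :: "(nat \<Rightarrow> nat list) \<Rightarrow> nat \<Rightarrow> nat \<Rightarrow> nat list" where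
  "morph_iter \<sigma> n a = (morph_word \<sigma> ^^ n) [a]"

definition uniform_morphism :: "nat \<Rightarrow> nat \<Rightarrow> (nat \<Rightarrow> nat list) \<Rightarrow> bool" where
  "uniform_morphism m k \<sigma> \<longleftrightarrow> (\<forall>a<m. length (\<sigma> a) = k \<and> set (\<sigma> a) \<subseteq> {..<m})"

text \<open>Matrix M_sigma(T), entry (i,j), and evaluation at T^(p^n) via composition.\<close>
definition M_sigma :: "(nat \<Rightarrow> nat list) \<Rightarrow> nat \<Rightarrow> nat \<Rightarrow> 'p::prime_card mod_ring poly" where
  "M_sigma \<sigma> i j = beta_word (\<sigma> i) j"

definition R_vec :: "(nat \<Rightarrow> nat list) \<Rightarrow> nat \<Rightarrow> nat \<Rightarrow> 'p::prime_card mod_ring poly" where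
  "R_vec \<sigma> n i = P_word (morph_iter \<sigma> n i)"

end

theory Submission
  imports Defs
begin

lemma P_word_Nil: "P_word [] = 0"
  by (simp add: P_word_def)

lemma P_word_Cons: "P_word (x # xs) = monom (of_nat x) (length xs) + P_word xs"
proof -
  have "P_word (x # xs) = (\<Sum>j<Suc (length xs). monom (of_nat ((x#xs) ! (length xs - j))) j)"
    by (simp add: P_word_def)
  also have "\<dots> = (\<Sum>j<length xs. monom (of_nat ((x#xs) ! (length xs - j))) j) + monom (of_nat x) (length xs)"
    by simp
  also have "(\<Sum>j<length xs. monom (of_nat ((x#xs) ! (length xs - j))) j) = P_word xs"
    unfolding P_word_def
  proof (rule sum.cong)
    fix j assume "j \<in> {..<length xs}"
    then have "length xs - j = Suc (length xs - 1 - j)" by auto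
    then show "monom (of_nat ((x#xs) ! (length xs - j))) j = monom (of_nat (xs ! (length xs - 1 - j))) j"
      by simp
  qed simp
  finally show ?thesis by (simp add: add.commute)
qed

lemma P_word_append: "P_word (u @ v) = P_word u * monom 1 (length v) + P_word v"
  by (induction u) (simp_all add: P_word_Nil P_word_Cons mult_monom algebra_simps)

lemma P_word_concat:
  assumes "\<forall>x\<in>set ws. length (g x) = L"
  shows "P_word (concat (map g ws)) = (\<Sum>k<length ws. P_word (g (ws!k)) * monom 1 (L * (length ws - 1 - k)))"
  using assms
proof (induction ws)
  case Nil then show ?case by (simp add: P_word_Nil)
next
  case (Cons x ws)
  have len: "length (concat (map g ws)) = L * length ws"
    using Cons.prems by (induction ws) auto
  show ?case
    using Cons by (simp add: P_word_append len sum.lessThan_Suc_shift del: sum.lessThan_Suc)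
qed

lemma monom_pcompose: "monom 1 e \<circ>\<^sub>p q = q ^ e"
  by (induction e) (simp_all add: monom_Suc pcompose_pCons monom_0 pcompose_const)

lemma iter_append: "(morph_word \<sigma> ^^ n) (u @ v) = (morph_word \<sigma> ^^ n) u @ (morph_word \<sigma> ^^ n) v"
  by (induction n arbitrary: u v) (simp_all add: morph_word_def)

lemma iter_concat: "(morph_word \<sigma> ^^ n) w = concat (map (\<lambda>a. (morph_word \<sigma> ^^ n) [a]) w)"
proof (induction w)
  case Nil
  show ?case by (induction n) (simp_all add: morph_word_def)
next
  case (Cons a w)
  then show ?case using iter_append[where \<sigma>=\<sigma> and n=n and u="[a]" and v=w] by simp
qed

lemma iter_len:
  assumes "uniform_morphism m k \<sigma>"
  shows "set w \<subseteq> {..<m} \<Longrightarrow> length ((morph_word \<sigma> ^^ n) w) = k ^ n * length w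
     \<and> set ((morph_word \<sigma> ^^ n) w) \<subseteq> {..<m}"
proof (induction n arbitrary: w)
  case 0 then show ?case by simp
next
  case (Suc n)
  have l: "length (morph_word \<sigma> w) = k * length w" and s: "set (morph_word \<sigma> w) \<subseteq> {..<m}"
    using Suc.prems assms unfolding uniform_morphism_def morph_word_def
    by (induction w) auto
  show ?case using Suc.IH[OF s] l by (simp add: funpow_Suc_right del: funpow.simps)
qed

theorem lemma4p9:
  fixes \<sigma> :: "nat \<Rightarrow> nat list" and m n :: nat
  assumes "uniform_morphism m CARD('p::prime_card) \<sigma>"
  shows "\<forall>i<m. (R_vec \<sigma> (Suc n) i :: 'p mod_ring poly) =
           (\<Sum>j<m. pcompose (M_sigma \<sigma> i j) (monom 1 (CARD('p) ^ n)) * R_vec \<sigma> n j)"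
proof (intro allI impI)
  fix i assume im: "i < m"
  define p where "p = CARD('p)"
  define L where "L = p ^ n"
  define w where "w = \<sigma> i"
  define F where "F = (\<lambda>a. (morph_word \<sigma> ^^ n) [a])"
  have lw: "length w = p" and sw: "set w \<subseteq> {..<m}"
    using assms im unfolding uniform_morphism_def w_def p_def by auto
  have lenF: "\<forall>x\<in>set w. length (F x) = L"
    using iter_len[OF assms, of "[_]" n] sw unfolding F_def L_def p_def by auto
  have "(R_vec \<sigma> (Suc n) i :: 'p mod_ring poly) = P_word ((morph_word \<sigma> ^^ n) w)"
    unfolding R_vec_def morph_iter_def w_def
    by (simp add: funpow_Suc_right morph_word_def del: funpow.simps)
  also have "\<dots> = P_word (concat (map F w))"
    using iter_concat unfolding F_def by metis
  also have "\<dots> = (\<Sum>k<p. P_word (F (w!k)) * monom 1 (L * (p - 1 - k)))"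
    using P_word_concat[OF lenF] lw by simp
  finally have lhs: "(R_vec \<sigma> (Suc n) i :: 'p mod_ring poly) = (\<Sum>k<p. P_word (F (w!k)) * monom 1 (L * (p - 1 - k)))" .
  have img: "(\<lambda>k. w ! k) ` {..<p} \<subseteq> {..<m}" using sw lw nth_mem by fastforce
  have "(\<Sum>j<m. pcompose (M_sigma \<sigma> i j) (monom 1 L) * (R_vec \<sigma> n j :: 'p mod_ring poly))
      = (\<Sum>j<m. \<Sum>k\<in>{k\<in>{..<p}. w ! k = j}. P_word (F (w!k)) * monom 1 (L * (p - 1 - k)))"
  proof (rule sum.cong[OF refl])
    fix j assume "j \<in> {..<m}"
    have S: "{k. k < length w \<and> w ! k = j} = {k\<in>{..<p}. w ! k = j}" using lw by auto
    have "pcompose (M_sigma \<sigma> i j) (monom 1 L) * R_vec \<sigma> n j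
        = (\<Sum>k\<in>{k\<in>{..<p}. w ! k = j}. monom 1 (L * (p - 1 - k)) * R_vec \<sigma> n j)"
      unfolding M_sigma_def beta_word_def w_def[symmetric] S
      by (simp add: pcompose_sum monom_pcompose monom_power sum_distrib_right sum_distrib_left lw mult.commute)
    also have "\<dots> = (\<Sum>k\<in>{k\<in>{..<p}. w ! k = j}. P_word (F (w!k)) * monom 1 (L * (p - 1 - k)))"
      by (rule sum.cong) (auto simp: R_vec_def morph_iter_def F_def mult.commute)
    finally show "pcompose (M_sigma \<sigma> i j) (monom 1 L) * R_vec \<sigma> n j = \<dots>" .
  qed
  also have "\<dots> = (\<Sum>k<p. P_word (F (w!k)) * monom 1 (L * (p - 1 - k)))"
    by (rule sum.group[OF _ _ img]) auto
  finally show "(R_vec \<sigma> (Suc n) i :: 'p mod_ring poly) =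
           (\<Sum>j<m. pcompose (M_sigma \<sigma> i j) (monom 1 (CARD('p) ^ n)) * R_vec \<sigma> n j)"
    using lhs unfolding L_def p_def by argo
qed

end
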